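(* Let $n\ge1$. Let $M'_n$ be the $2^{n-1}\times2^{n-1}$ matrix with rows and columns indexed by subsets of $\{1,\dots,n-1\}$ and $(M'_n)_{I,J}=a_{n,I,J}$, the number of simple $n$-braids $x$ with $D_L(x)=I$ and $D_R(x)\supseteq J$. Let $M_n$ be the $n!\times n!$ matrix with rows and columns indexed by the simple $n$-braids (same order for rows and columns) with $(M_n)_{x,y}=1$ if $(x,y)$ is normal and $0$ otherwise. Then the characteristic polynomials of $M'_n$ and $M_n$ coincide up to a factor that is a power of the variable, and for every simple $n$-braid $y$ with $D_L(y)=J$ and every $d\ge1$, $$b_{n,d}(y)=\big((1,1,\dots,1)\,M_n'^{\,d-1}\big)_J.$$
   Context: $B_n^+$ is the positive braid monoid with generators $\sigma_1,\dots,\sigma_{n-1}$ and relations $\sigma_i\sigma_j=\sigma_j\sigma_i$ ($|i-j|\ge2$), $\sigma_i\sigma_j\sigma_i=\sigma_j\sigma_i\sigma_j$ ($|i-j|=1$). $\Delta_1=1$, $\Delta_n=\sigma_1\cdots\sigma_{n-1}\Delta_{n-1}$. Simple $n$-braids are the left (equivalently right) divisors of $\Delta_n$ in $B_n^+$. For simple $x$, $D_L(x)$ (resp. $D_R(x)$) is the set of $i\in\{1,\dots,n-1\}$ with $\sigma_i$ a left (resp. right) divisor of $x$. A sequence $(x_1,\dots,x_d)$ of simple $n$-braids is normal if $x_k=\gcd(\Delta_n,x_k\cdots x_d)$ (greatest common left divisor) for each $k$; equivalently $D_R(x_k)\supseteq D_L(x_{k+1})$ for all $k<d$. For a simple $n$-braid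 $y$, $b_{n,d}(y)$ is the number of normal sequences $(x_1,\dots,x_{d-1},y)$. *)

theory Defs
  imports "Jordan_Normal_Form.Char_Poly"
begin

text \<open>Positive braid words on n strands: lists over the generator indices 1..n-1
  (the letter i stands for sigma_i).\<close>

definition braid_word :: "nat \<Rightarrow> nat list \<Rightarrow> bool" where
  "braid_word n w \<longleftrightarrow> set w \<subseteq> {1..<n}"

inductive braid_step :: "nat \<Rightarrow> nat list \<Rightarrow> nat list \<Rightarrow> bool" for n where
  comm: "\<lbrakk>i \<in> {1..<n}; j \<in> {1..<n}; i + 2 \<le> j \<or> j + 2 \<le> i\<rbrakk>
     \<Longrightarrow> braid_step n (a @ [i, j] @ b) (a @ [j, i] @ b)"
| braid: "\<lbrakk>i \<in> {1..<n}; j \<in> {1..<n}; i = j + 1 \<or> j = i + 1\<rbrakk>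
     \<Longrightarrow> braid_step n (a @ [i, j, i] @ b) (a @ [j, i, j] @ b)"

definition braid_eq :: "nat \<Rightarrow> nat list \<Rightarrow> nat list \<Rightarrow> bool" where
  "braid_eq n = equivclp (braid_step n)"

text \<open>The element of B_n^+ represented by a word (its equivalence class of words).\<close>
definition braid_of :: "nat \<Rightarrow> nat list \<Rightarrow> nat list set" where
  "braid_of n w = {v. braid_word n v \<and> braid_eq n w v}"

fun delta_word :: "nat \<Rightarrow> nat list" where
  "delta_word 0 = []"
| "delta_word (Suc n) = [1..<Suc n] @ delta_word n"

definition left_div :: "nat \<Rightarrow> nat list \<Rightarrow> nat list \<Rightarrow> bool" where
  "left_div n w z \<longleftrightarrow> (\<exists>u. braid_word n u \<and> braid_eq n (w @ u) z)"

definition simple_braids :: "nat \<Rightarrow> nat list set set" where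
  "simple_braids n = {braid_of n w | w. braid_word n w \<and> left_div n w (delta_word n)}"

definition D_L :: "nat \<Rightarrow> nat list set \<Rightarrow> nat set" where
  "D_L n x = {i \<in> {1..<n}. \<exists>w\<in>x. left_div n [i] w}"

definition D_R :: "nat \<Rightarrow> nat list set \<Rightarrow> nat set" where
  "D_R n x = {i \<in> {1..<n}. \<exists>w\<in>x. \<exists>u. braid_word n u \<and> braid_eq n (u @ [i]) w}"

text \<open>Normal sequences of simple braids (descent-set characterisation:
  D_R(x_k) contains D_L(x_(k+1))).\<close>
definition normal_seq :: "nat \<Rightarrow> nat list set list \<Rightarrow> bool" where
  "normal_seq n xs \<longleftrightarrow> set xs \<subseteq> simple_braids n \<and>
     (\<forall>k. Suc k < length xs \<longrightarrow> D_L n (xs ! Suc k) \<subseteq> D_R n (xs ! k))"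

definition b_count :: "nat \<Rightarrow> nat \<Rightarrow> nat list set \<Rightarrow> nat" where
  "b_count n d y = card {xs. length xs = d \<and> last xs = y \<and> normal_seq n xs}"

definition a_count :: "nat \<Rightarrow> nat set \<Rightarrow> nat set \<Rightarrow> nat" where
  "a_count n I J = card {x \<in> simple_braids n. D_L n x = I \<and> J \<subseteq> D_R n x}"

definition M'_mat :: "nat \<Rightarrow> (nat \<Rightarrow> nat set) \<Rightarrow> int mat" where
  "M'_mat n e = mat (2 ^ (n - 1)) (2 ^ (n - 1)) (\<lambda>(i, j). int (a_count n (e i) (e j)))"

definition M_mat :: "nat \<Rightarrow> (nat \<Rightarrow> nat list set) \<Rightarrow> int mat" where
  "M_mat n f = mat (fact n) (fact n)
     (\<lambda>(i, j). if normal_seq n [f i, f j] then 1 else 0)"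

end

theory Submission
  imports Defs
begin


lemma sylvester_det:
  fixes P :: "'a::idom mat"
  assumes P: "P \<in> carrier_mat m k" and Q: "Q \<in> carrier_mat k m"
  shows "x ^ k * det (x \<cdot>\<^sub>m 1\<^sub>m m - P * Q) = x ^ m * det (x \<cdot>\<^sub>m 1\<^sub>m k - Q * P)"
proof -
  define Z where "Z = four_block_mat (x \<cdot>\<^sub>m 1\<^sub>m m) P Q (1\<^sub>m k)"
  define L1 where "L1 = four_block_mat (1\<^sub>m m) (-P) (0\<^sub>m k m) (1\<^sub>m k)"
  define L2 where "L2 = four_block_mat (1\<^sub>m m) (0\<^sub>m m k) (-Q) (x \<cdot>\<^sub>m 1\<^sub>m k)"
  have Zc: "Z \<in> carrier_mat (m+k) (m+k)" unfolding Z_def using P Q by auto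
  have L1c: "L1 \<in> carrier_mat (m+k) (m+k)" unfolding L1_def using P Q by auto
  have L2c: "L2 \<in> carrier_mat (m+k) (m+k)" unfolding L2_def using P Q by auto
  have "L1 * Z = four_block_mat (1\<^sub>m m * (x \<cdot>\<^sub>m 1\<^sub>m m) + (-P) * Q) (1\<^sub>m m * P + (-P) * 1\<^sub>m k)
      (0\<^sub>m k m * (x \<cdot>\<^sub>m 1\<^sub>m m) + 1\<^sub>m k * Q) (0\<^sub>m k m * P + 1\<^sub>m k * 1\<^sub>m k)"
    unfolding L1_def Z_def by (rule mult_four_block_mat, insert P Q, auto)
  also have "\<dots> = four_block_mat (x \<cdot>\<^sub>m 1\<^sub>m m - P * Q) (0\<^sub>m m k) Q (1\<^sub>m k)"
    using P Q by (intro cong_four_block_mat, auto)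
  finally have e1: "L1 * Z = \<dots>" .
  have "L2 * Z = four_block_mat (1\<^sub>m m * (x \<cdot>\<^sub>m 1\<^sub>m m) + 0\<^sub>m m k * Q) (1\<^sub>m m * P + 0\<^sub>m m k * 1\<^sub>m k)
      ((-Q) * (x \<cdot>\<^sub>m 1\<^sub>m m) + (x \<cdot>\<^sub>m 1\<^sub>m k) * Q) ((-Q) * P + (x \<cdot>\<^sub>m 1\<^sub>m k) * 1\<^sub>m k)"
    unfolding L2_def Z_def by (rule mult_four_block_mat, insert P Q, auto)
  also have "\<dots> = four_block_mat (x \<cdot>\<^sub>m 1\<^sub>m m) P (0\<^sub>m k m) (x \<cdot>\<^sub>m 1\<^sub>m k - Q * P)"
    using P Q by (intro cong_four_block_mat, auto)
  finally have e2: "L2 * Z = \<dots>" .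
  have d1: "det L1 = 1" unfolding L1_def
    by (subst det_four_block_mat_lower_left_zero[of _ m _ k], insert P, auto)
  have d2: "det L2 = x ^ k" unfolding L2_def
    by (subst det_four_block_mat_upper_right_zero[of _ m _ k], insert Q, auto)
  have "det Z = det (x \<cdot>\<^sub>m 1\<^sub>m m - P * Q)"
  proof -
    have "det Z = det (L1 * Z)" using det_mult[OF L1c Zc] d1 by simp
    also have "\<dots> = det (x \<cdot>\<^sub>m 1\<^sub>m m - P * Q)" unfolding e1
      by (subst det_four_block_mat_upper_right_zero[of _ m _ k], insert P Q, auto)
    finally show ?thesis .
  qed
  moreover have "x ^ k * det Z = x ^ m * det (x \<cdot>\<^sub>m 1\<^sub>m k - Q * P)"
  proof -
    have "x ^ k * det Z = det (L2 * Z)" using det_mult[OF L2c Zc] d2 by simp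
    also have "\<dots> = x ^ m * det (x \<cdot>\<^sub>m 1\<^sub>m k - Q * P)" unfolding e2
      by (subst det_four_block_mat_lower_left_zero[of _ m _ k], insert P Q, auto)
    finally show ?thesis .
  qed
  ultimately show ?thesis by simp
qed

interpretation cpoly: comm_ring_hom "(\<lambda>a::int. [:a:])"
  by unfold_locales (auto simp: one_pCons)

lemma char_poly_matrix_alt:
  fixes M :: "int mat" assumes "M \<in> carrier_mat m m"
  shows "char_poly_matrix M = [:0,1:] \<cdot>\<^sub>m 1\<^sub>m m - map_mat (\<lambda>a. [:a:]) M"
  unfolding char_poly_matrix_def using assms by (intro eq_matI, auto)

lemma char_poly_AB:
  fixes A :: "int mat"
  assumes A: "A \<in> carrier_mat m k" and B: "B \<in> carrier_mat k m" and km: "k \<le> m"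
  shows "char_poly (A * B) = [:0,1:] ^ (m - k) * char_poly (B * A)"
proof -
  let ?X = "[:0,1::int:]"
  let ?A = "map_mat (\<lambda>a. [:a:]) A" and ?B = "map_mat (\<lambda>a. [:a:]) B"
  have "char_poly (A * B) = det (?X \<cdot>\<^sub>m 1\<^sub>m m - ?A * ?B)"
    unfolding char_poly_def using A B
    by (subst char_poly_matrix_alt[of _ m], auto simp: cpoly.mat_hom_mult)
  moreover have "char_poly (B * A) = det (?X \<cdot>\<^sub>m 1\<^sub>m k - ?B * ?A)"
    unfolding char_poly_def using A B
    by (subst char_poly_matrix_alt[of _ k], auto simp: cpoly.mat_hom_mult)
  moreover have "?X ^ k * det (?X \<cdot>\<^sub>m 1\<^sub>m m - ?A * ?B) = ?X ^ m * det (?X \<cdot>\<^sub>m 1\<^sub>m k - ?B * ?A)"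
    by (rule sylvester_det, insert A B, auto)
  ultimately have "?X ^ k * char_poly (A * B) = ?X ^ k * (?X ^ (m - k) * char_poly (B * A))"
    using km by (simp add: power_add[symmetric])
  then show ?thesis by simp
qed


lemma fact_ge_pow2: "(2::nat) ^ (n - 1) \<le> fact n"
proof (induction n)
  case 0 then show ?case by simp
next
  case (Suc n)
  show ?case
  proof (cases n)
    case 0 then show ?thesis by simp
  next
    case (Suc m)
    have "2 ^ (Suc n - 1) = 2 * 2 ^ (n - 1)" using Suc by simp
    also have "\<dots> \<le> Suc n * fact n" using Suc.IH Suc by (intro mult_mono) auto
    finally show ?thesis by simp
  qed
qed

lemma normal_seq_snoc:
  "normal_seq n (xs @ [y]) \<longleftrightarrow> normal_seq n xs \<and> y \<in> simple_braids n \<and>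
     (xs \<noteq> [] \<longrightarrow> D_L n y \<subseteq> D_R n (last xs))"
proof
  assume H: "normal_seq n (xs @ [y])"
  have 1: "normal_seq n xs"
    unfolding normal_seq_def
  proof (intro conjI allI impI)
    show "set xs \<subseteq> simple_braids n" using H unfolding normal_seq_def by auto
    fix k assume "Suc k < length xs"
    then show "D_L n (xs ! Suc k) \<subseteq> D_R n (xs ! k)"
      using H unfolding normal_seq_def
      by (metis (no_types, lifting) Suc_lessD length_append_singleton less_SucI nth_append_left)
  qed
  have 2: "y \<in> simple_braids n" using H unfolding normal_seq_def by auto
  have 3: "D_L n y \<subseteq> D_R n (last xs)" if ne: "xs \<noteq> []"
  proof -
    obtain k where k: "length xs = Suc k" using ne by (cases xs) auto
    have "D_L n ((xs @ [y]) ! Suc k) \<subseteq> D_R n ((xs @ [y]) ! k)"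
      using H k unfolding normal_seq_def by auto
    then show ?thesis using k ne by (simp add: nth_append last_conv_nth)
  qed
  show "normal_seq n xs \<and> y \<in> simple_braids n \<and> (xs \<noteq> [] \<longrightarrow> D_L n y \<subseteq> D_R n (last xs))"
    using 1 2 3 by blast
next
  assume H: "normal_seq n xs \<and> y \<in> simple_braids n \<and> (xs \<noteq> [] \<longrightarrow> D_L n y \<subseteq> D_R n (last xs))"
  show "normal_seq n (xs @ [y])"
    unfolding normal_seq_def
  proof (intro conjI allI impI)
    show "set (xs @ [y]) \<subseteq> simple_braids n" using H unfolding normal_seq_def by auto
    fix k assume k: "Suc k < length (xs @ [y])"
    show "D_L n ((xs @ [y]) ! Suc k) \<subseteq> D_R n ((xs @ [y]) ! k)"
    proof (cases "Suc k < length xs")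
      case True
      then show ?thesis using H unfolding normal_seq_def by (simp add: nth_append)
    next
      case False
      then have L: "length xs = Suc k" using k by simp
      then show ?thesis using H by (auto simp: nth_append last_conv_nth)
    qed
  qed
qed

theorem lemma2p12:
  fixes n :: nat and e :: "nat \<Rightarrow> nat set" and f :: "nat \<Rightarrow> nat list set"
  assumes "n \<ge> 1"
    and "bij_betw e {..<2 ^ (n - 1)} (Pow {1..<n})"
    and "bij_betw f {..<fact n} (simple_braids n)"
  shows "(\<exists>k. char_poly (M_mat n f) = [:0, 1:] ^ k * char_poly (M'_mat n e))
    \<and> (\<forall>y \<in> simple_braids n. \<forall>d \<ge> 1. \<forall>j < 2 ^ (n - 1). e j = D_L n y \<longrightarrow>
          int (b_count n d y) = (\<Sum>i < 2 ^ (n - 1). (M'_mat n e ^\<^sub>m (d - 1)) $$ (i, j)))"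
proof -
  let ?S = "simple_braids n"
  define N where "N = (2::nat) ^ (n - 1)"
  define F where "F = (fact n :: nat)"
  have eb: "bij_betw e {..<N} (Pow {1..<n})" using assms(2) unfolding N_def .
  have fb: "bij_betw f {..<F} ?S" using assms(3) unfolding F_def .
  have finS: "finite ?S" using bij_betw_finite fb by blast
  have DLsub: "D_L n x \<in> Pow {1..<n}" for x unfolding D_L_def by auto
  define idx where "idx x = inv_into {..<N} e (D_L n x)" for x
  have idx_lt: "idx x < N" for x
    unfolding idx_def using DLsub eb by (metis bij_betw_def inv_into_into lessThan_iff)
  have e_idx: "e (idx x) = D_L n x" for x
    unfolding idx_def using DLsub eb by (meson bij_betw_inv_into_right)
  have einj: "inj_on e {..<N}" using eb bij_betw_def by blast
  have idx_iff: "l < N \<Longrightarrow> (D_L n x = e l \<longleftrightarrow> l = idx x)" for l x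
    using einj e_idx idx_lt by (metis inj_on_def lessThan_iff)
  have M'dim: "M'_mat n e \<in> carrier_mat N N" unfolding M'_mat_def N_def by auto
  have M'idx: "M'_mat n e $$ (i, j) = int (a_count n (e i) (e j))" if "i < N" "j < N" for i j
    unfolding M'_mat_def N_def using that N_def by auto
  have fS: "f i \<in> ?S" if "i < F" for i using fb that bij_betwE by blast
  have finj: "inj_on f {..<F}" using fb bij_betw_def by blast
  have norm2: "normal_seq n [x, y] \<longleftrightarrow> D_L n y \<subseteq> D_R n x" if "x \<in> ?S" "y \<in> ?S" for x y
    using that unfolding normal_seq_def by (auto simp: less_Suc_eq)
  define A :: "int mat" where "A = mat F N (\<lambda>(i, l). if e l \<subseteq> D_R n (f i) then 1 else 0)"
  define B :: "int mat" where "B = mat N F (\<lambda>(l, j). if D_L n (f j) = e l then 1 else 0)"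
  have Ac: "A \<in> carrier_mat F N" unfolding A_def by auto
  have Bc: "B \<in> carrier_mat N F" unfolding B_def by auto
  have MAB: "M_mat n f = A * B"
  proof (rule eq_matI)
    show "dim_row (M_mat n f) = dim_row (A * B)" "dim_col (M_mat n f) = dim_col (A * B)"
      unfolding M_mat_def A_def B_def F_def by auto
    fix i j assume i: "i < dim_row (A * B)" and j: "j < dim_col (A * B)"
    then have i: "i < F" and j: "j < F" unfolding A_def B_def by auto
    have "(A * B) $$ (i, j) = (\<Sum>l<N. A $$ (i, l) * B $$ (l, j))"
      using i j Ac Bc by (auto simp: scalar_prod_def lessThan_atLeast0 intro!: sum.cong)
    also have "\<dots> = (\<Sum>l<N. if l = idx (f j) then (if D_L n (f j) \<subseteq> D_R n (f i) then 1 else 0) else 0)"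
      unfolding A_def B_def using i j idx_iff by (intro sum.cong refl) auto
    also have "\<dots> = (if D_L n (f j) \<subseteq> D_R n (f i) then 1 else 0)"
      using idx_lt by simp
    also have "\<dots> = M_mat n f $$ (i, j)"
      unfolding M_mat_def using i j norm2[OF fS[OF i] fS[OF j]] F_def by auto
    finally show "M_mat n f $$ (i, j) = (A * B) $$ (i, j)" by simp
  qed
  have MBA: "M'_mat n e = B * A"
  proof (rule eq_matI)
    show "dim_row (M'_mat n e) = dim_row (B * A)" "dim_col (M'_mat n e) = dim_col (B * A)"
      unfolding M'_mat_def A_def B_def N_def by auto
    fix l l' assume l: "l < dim_row (B * A)" and l': "l' < dim_col (B * A)"
    then have l: "l < N" and l': "l' < N" unfolding A_def B_def by auto
    have "(B * A) $$ (l, l') = (\<Sum>i<F. B $$ (l, i) * A $$ (i, l'))"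
      using l l' Ac Bc by (auto simp: scalar_prod_def lessThan_atLeast0 intro!: sum.cong)
    also have "\<dots> = (\<Sum>i<F. of_bool (D_L n (f i) = e l \<and> e l' \<subseteq> D_R n (f i)))"
      unfolding A_def B_def using l l' by (intro sum.cong refl) auto
    also have "\<dots> = int (card ({..<F} \<inter> {i. D_L n (f i) = e l \<and> e l' \<subseteq> D_R n (f i)}))"
      by simp
    also have "card ({..<F} \<inter> {i. D_L n (f i) = e l \<and> e l' \<subseteq> D_R n (f i)})
       = card (f ` ({..<F} \<inter> {i. D_L n (f i) = e l \<and> e l' \<subseteq> D_R n (f i)}))"
      by (rule card_image[symmetric], rule inj_on_subset[OF finj], auto)
    also have "f ` ({..<F} \<inter> {i. D_L n (f i) = e l \<and> e l' \<subseteq> D_R n (f i)})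
       = {x \<in> ?S. D_L n x = e l \<and> e l' \<subseteq> D_R n x}"
    proof
      show "f ` ({..<F} \<inter> {i. D_L n (f i) = e l \<and> e l' \<subseteq> D_R n (f i)})
          \<subseteq> {x \<in> ?S. D_L n x = e l \<and> e l' \<subseteq> D_R n x}" using fS by auto
      show "{x \<in> ?S. D_L n x = e l \<and> e l' \<subseteq> D_R n x} \<subseteq>
          f ` ({..<F} \<inter> {i. D_L n (f i) = e l \<and> e l' \<subseteq> D_R n (f i)})"
      proof
        fix x assume x: "x \<in> {x \<in> ?S. D_L n x = e l \<and> e l' \<subseteq> D_R n x}"
        then obtain i where "i < F" "x = f i" using fb unfolding bij_betw_def
          by (metis (no_types, lifting) imageE lessThan_iff mem_Collect_eq)
        then show "x \<in> f ` ({..<F} \<inter> {i. D_L n (f i) = e l \<and> e l' \<subseteq> D_R n (f i)})"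
          using x by auto
      qed
    qed
    finally show "M'_mat n e $$ (l, l') = (B * A) $$ (l, l')"
      using M'idx[OF l l'] unfolding a_count_def by simp
  qed
  have part1: "\<exists>k. char_poly (M_mat n f) = [:0, 1:] ^ k * char_poly (M'_mat n e)"
    unfolding MAB MBA using char_poly_AB[OF Ac Bc] fact_ge_pow2[of n] unfolding N_def F_def by blast
  define T where "T d y = {xs. length xs = d \<and> last xs = y \<and> normal_seq n xs}" for d y
  have finT: "finite (T d y)" for d y
  proof (rule finite_subset[OF _ finite_lists_length_eq[OF finS, of d]])
    show "T d y \<subseteq> {xs. set xs \<subseteq> ?S \<and> length xs = d}"
      unfolding T_def normal_seq_def by auto
  qed
  define P where "P = M'_mat n e"
  define c where "c d j = (\<Sum>i<N. (P ^\<^sub>m d) $$ (i, j))" for d j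
  have Pc: "P \<in> carrier_mat N N" using M'dim P_def by simp
  have Pd: "P ^\<^sub>m d \<in> carrier_mat N N" for d using pow_carrier_mat[OF Pc] by blast
  have main: "\<forall>y\<in>?S. int (card (T (Suc d) y)) = c d (idx y)" for d
  proof (induction d)
    case 0
    show ?case
    proof
      fix y assume y: "y \<in> ?S"
      have "T (Suc 0) y = {[y]}"
        unfolding T_def using y by (auto simp: length_Suc_conv normal_seq_def)
      moreover have "c 0 (idx y) = 1"
      proof -
        have "c 0 (idx y) = (\<Sum>i<N. if i = idx y then 1 else 0)"
          unfolding c_def using Pc idx_lt by (intro sum.cong refl) auto
        also have "\<dots> = 1" using idx_lt by simp
        finally show ?thesis .
      qed
      ultimately show "int (card (T (Suc 0) y)) = c 0 (idx y)" by simp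
    qed
  next
    case (Suc d)
    show ?case
    proof
      fix y assume y: "y \<in> ?S"
      define S' where "S' = {x \<in> ?S. D_L n y \<subseteq> D_R n x}"
      have finS': "finite S'" unfolding S'_def using finS by simp
      have Teq: "T (Suc (Suc d)) y = (\<Union>x\<in>S'. (\<lambda>xs. xs @ [y]) ` T (Suc d) x)"
      proof
        show "T (Suc (Suc d)) y \<subseteq> (\<Union>x\<in>S'. (\<lambda>xs. xs @ [y]) ` T (Suc d) x)"
        proof
          fix xs assume xs: "xs \<in> T (Suc (Suc d)) y"
          define ys where "ys = butlast xs"
          have ne: "xs \<noteq> []" using xs unfolding T_def by auto
          have xs_eq: "xs = ys @ [y]" using xs ne unfolding T_def ys_def
            by (metis (mono_tags, lifting) append_butlast_last_id mem_Collect_eq)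
          have ly: "length ys = Suc d" using xs unfolding T_def ys_def by auto
          then have yne: "ys \<noteq> []" by auto
          have ns: "normal_seq n ys" "D_L n y \<subseteq> D_R n (last ys)"
            using xs yne unfolding T_def by (auto simp: xs_eq normal_seq_snoc)
          have "last ys \<in> ?S" using ns(1) yne unfolding normal_seq_def by auto
          then have "last ys \<in> S'" using ns(2) unfolding S'_def by auto
          moreover have "ys \<in> T (Suc d) (last ys)" using ly ns unfolding T_def by auto
          ultimately show "xs \<in> (\<Union>x\<in>S'. (\<lambda>xs. xs @ [y]) ` T (Suc d) x)"
            using xs_eq by blast
        qed
        show "(\<Union>x\<in>S'. (\<lambda>xs. xs @ [y]) ` T (Suc d) x) \<subseteq> T (Suc (Suc d)) y"
        proof
          fix xs assume "xs \<in> (\<Union>x\<in>S'. (\<lambda>xs. xs @ [y]) ` T (Suc d) x)"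
          then obtain x ys where x: "x \<in> S'" and ys: "ys \<in> T (Suc d) x" and xs: "xs = ys @ [y]"
            by blast
          have yne: "ys \<noteq> []" using ys unfolding T_def by auto
          show "xs \<in> T (Suc (Suc d)) y"
            using x ys yne y unfolding T_def S'_def xs by (auto simp: normal_seq_snoc)
        qed
      qed
      have "card (T (Suc (Suc d)) y) = (\<Sum>x\<in>S'. card ((\<lambda>xs. xs @ [y]) ` T (Suc d) x))"
        unfolding Teq
      proof (rule card_UN_disjoint[OF finS'])
        show "\<forall>i\<in>S'. finite ((\<lambda>xs. xs @ [y]) ` T (Suc d) i)" using finT by blast
        show "\<forall>i\<in>S'. \<forall>j\<in>S'. i \<noteq> j \<longrightarrow>
          (\<lambda>xs. xs @ [y]) ` T (Suc d) i \<inter> (\<lambda>xs. xs @ [y]) ` T (Suc d) j = {}"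
          unfolding T_def by auto
      qed
      also have "\<dots> = (\<Sum>x\<in>S'. card (T (Suc d) x))"
        by (intro sum.cong refl card_image) (auto simp: inj_on_def)
      finally have "int (card (T (Suc (Suc d)) y)) = (\<Sum>x\<in>S'. int (card (T (Suc d) x)))"
        by simp
      also have "\<dots> = (\<Sum>x\<in>S'. c d (idx x))"
        using Suc.IH unfolding S'_def by (intro sum.cong refl) auto
      also have "\<dots> = (\<Sum>l\<in>{..<N}. of_nat (card {x \<in> S'. idx x = l}) * c d l)"
        by (rule sum_fun_comp[OF finS']) (use idx_lt in auto)
      also have "\<dots> = (\<Sum>l<N. c d l * P $$ (l, idx y))"
      proof (intro sum.cong refl)
        fix l assume l: "l \<in> {..<N}"
        have "{x \<in> S'. idx x = l} = {x \<in> ?S. D_L n x = e l \<and> e (idx y) \<subseteq> D_R n x}"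
          unfolding S'_def e_idx using idx_iff l by auto
        then show "of_nat (card {x \<in> S'. idx x = l}) * c d l = c d l * P $$ (l, idx y)"
          unfolding P_def using M'idx[of l "idx y"] l idx_lt unfolding a_count_def by simp
      qed
      also have "\<dots> = c (Suc d) (idx y)"
      proof -
        have "c (Suc d) (idx y) = (\<Sum>i<N. \<Sum>l<N. (P ^\<^sub>m d) $$ (i, l) * P $$ (l, idx y))"
          unfolding c_def using Pd Pc idx_lt
          by (auto simp: scalar_prod_def lessThan_atLeast0 intro!: sum.cong)
        also have "\<dots> = (\<Sum>l<N. \<Sum>i<N. (P ^\<^sub>m d) $$ (i, l) * P $$ (l, idx y))"
          by (rule sum.swap)
        also have "\<dots> = (\<Sum>l<N. c d l * P $$ (l, idx y))"
          unfolding c_def by (simp add: sum_distrib_right)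
        finally show ?thesis by simp
      qed
      finally show "int (card (T (Suc (Suc d)) y)) = c (Suc d) (idx y)" .
    qed
  qed
  have part2: "\<forall>y \<in> ?S. \<forall>d::nat \<ge> 1. \<forall>j < N. e j = D_L n y \<longrightarrow>
          int (b_count n d y) = (\<Sum>i < N. (P ^\<^sub>m (d - 1)) $$ (i, j))"
  proof (intro ballI allI impI)
    fix y and d :: nat and j assume y: "y \<in> ?S" and d: "1 \<le> d" and j: "j < N" and ej: "e j = D_L n y"
    have jj: "j = idx y" using idx_iff[OF j, of y] ej by simp
    have dd: "d = Suc (d - 1)" using d by simp
    have "int (b_count n d y) = int (card (T (Suc (d - 1)) y))"
      unfolding b_count_def T_def using dd by simp
    also have "\<dots> = c (d - 1) (idx y)" using main y by blast
    finally show "int (b_count n d y) = (\<Sum>i < N. (P ^\<^sub>m (d - 1)) $$ (i, j))"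
      unfolding c_def jj .
  qed
  show ?thesis using part1 part2 unfolding N_def P_def by blast
qed

end
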